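(* Let $H$ be a graded, connected Hopf algebra over $K$ with a symmetric, non-degenerate Hopf pairing $\langle-,-\rangle$ on $H\times H$, and let $\mathfrak g=\mathrm{Prim}(H)$. Fix $n\in\mathbb N$. Let $\mathfrak h_n$ be a complement of $(\mathfrak g\cap H^{+2})_n$ in $\mathfrak g_n$ and $m_n$ a complement of $(\mathfrak g\cap H^{+2})_n$ in $(H^{+2})_n$. Then $\mathfrak h_n$ is non-isotropic (the restriction of the pairing to $\mathfrak h_n\times\mathfrak h_n$ is non-degenerate), and there exists a complement $w_n$ of $\mathfrak g_n+(H^{+2})_n$ in $H_n$ such that, with orthogonals taken inside $H_n$: (i) $w_n^\perp=w_n\oplus\mathfrak h_n\oplus m_n$ and the restriction of the pairing to $(\mathfrak g\cap H^{+2})_n\times w_n$ is non-degenerate; (ii) $\mathfrak h_n^\perp=(\mathfrak g\cap H^{+2})_n\oplus m_n\oplus w_n$ and the restriction to $\mathfrak h_n\times\mathfrak h_n$ is non-degenerate; (iii) $m_n^\perp=(\mathfrak g\cap H^{+2})_n\oplus\mathfrak h_n\oplus w_n$ and the restriction to $m_n\times m_n$ is non-degenerate; (iv) $((\mathfrak g\cap H^{+2})_n)^\perp=(\mathfrak g\cap H^{+2})_n\oplus m_n\oplus\mathfrak h_n$ and the restriction to $w_n\times(\mathfrak g\cap H^{+2})_n$ is non-degenerate.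
   Context: $K$ is a commutative field of characteristic $\neq2$. A graded connected Hopf algebra is a Hopf algebra $H=\bigoplus_{n\ge0}H_n$ over $K$ with homogeneous structure maps, $H_0=K$ and every $H_n$ finite-dimensional. $H^+=\bigoplus_{n\ge1}H_n$, $H^{+2}$ is the span of products of two elements of $H^+$, $\mathfrak g_n=\mathfrak g\cap H_n$. A Hopf pairing on $H\times H$ is a bilinear form with $\langle x,1\rangle=\varepsilon(x)=\langle1,x\rangle$, $\langle xy,z\rangle=\langle x\otimes y,\Delta(z)\rangle$, $\langle x,yz\rangle=\langle\Delta(x),y\otimes z\rangle$, and $\langle H_i,H_j\rangle=0$ for $i\ne j$. *)

theory Defs
  imports Main "HOL.Vector_Spaces"
begin

text \<open>The ground field is a type 'k of class field; the Hopf
algebra H is the whole type 'h (an abelian group) with scalar multiplication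
scale, forming a K-vector space.  Elements of H (x) H are represented by finite
lists of pairs (a,b), standing for the sum of the a (x) b; two such lists
represent the same tensor iff every K-bilinear form takes the same value on
them (bilinear forms separate the points of the algebraic tensor product).
Likewise for H (x) H (x) H with trilinear forms.\<close>

definition bilinear_form :: "('k::field \<Rightarrow> 'h::ab_group_add \<Rightarrow> 'h) \<Rightarrow> ('h \<Rightarrow> 'h \<Rightarrow> 'k) \<Rightarrow> bool" where
  "bilinear_form scale \<beta> \<longleftrightarrow>
     (\<forall>x. Vector_Spaces.linear scale (*) (\<beta> x)) \<and> (\<forall>y. Vector_Spaces.linear scale (*) (\<lambda>x. \<beta> x y))"

definition trilinear_form :: "('k::field \<Rightarrow> 'h::ab_group_add \<Rightarrow> 'h) \<Rightarrow> ('h \<Rightarrow> 'h \<Rightarrow> 'h \<Rightarrow> 'k) \<Rightarrow> bool" where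
  "trilinear_form scale \<gamma> \<longleftrightarrow>
     (\<forall>x y. Vector_Spaces.linear scale (*) (\<gamma> x y)) \<and>
     (\<forall>x z. Vector_Spaces.linear scale (*) (\<lambda>y. \<gamma> x y z)) \<and>
     (\<forall>y z. Vector_Spaces.linear scale (*) (\<lambda>x. \<gamma> x y z))"

definition tens_eval :: "('h \<Rightarrow> 'h \<Rightarrow> 'c::comm_monoid_add) \<Rightarrow> ('h \<times> 'h) list \<Rightarrow> 'c" where
  "tens_eval \<beta> l = sum_list (map (\<lambda>(a, b). \<beta> a b) l)"

definition tens3_eval :: "('h \<Rightarrow> 'h \<Rightarrow> 'h \<Rightarrow> 'c::comm_monoid_add) \<Rightarrow> ('h \<times> 'h \<times> 'h) list \<Rightarrow> 'c" where
  "tens3_eval \<gamma> l = sum_list (map (\<lambda>(a, b, c). \<gamma> a b c) l)"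

definition tens_eq :: "('k::field \<Rightarrow> 'h::ab_group_add \<Rightarrow> 'h) \<Rightarrow> ('h \<times> 'h) list \<Rightarrow> ('h \<times> 'h) list \<Rightarrow> bool" where
  "tens_eq scale l1 l2 \<longleftrightarrow>
     (\<forall>\<beta>. bilinear_form scale \<beta> \<longrightarrow> tens_eval \<beta> l1 = tens_eval \<beta> l2)"

definition tens3_eq :: "('k::field \<Rightarrow> 'h::ab_group_add \<Rightarrow> 'h) \<Rightarrow> ('h \<times> 'h \<times> 'h) list \<Rightarrow> ('h \<times> 'h \<times> 'h) list \<Rightarrow> bool" where
  "tens3_eq scale l1 l2 \<longleftrightarrow>
     (\<forall>\<gamma>. trilinear_form scale \<gamma> \<longrightarrow> tens3_eval \<gamma> l1 = tens3_eval \<gamma> l2)"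

definition graded_connected_hopf ::
  "('k::field \<Rightarrow> 'h::ab_group_add \<Rightarrow> 'h) \<Rightarrow> (nat \<Rightarrow> 'h set) \<Rightarrow> ('h \<Rightarrow> 'h \<Rightarrow> 'h) \<Rightarrow> 'h
    \<Rightarrow> ('h \<Rightarrow> ('h \<times> 'h) list) \<Rightarrow> ('h \<Rightarrow> 'k) \<Rightarrow> bool" where
  "graded_connected_hopf scale Hn mult one Delta eps \<longleftrightarrow>
     \<comment> \<open>vector space, grading\<close>
     vector_space scale \<and>
     (\<forall>i. module.subspace scale (Hn i)) \<and>
     (\<forall>i. \<exists>B. finite B \<and> Hn i = module.span scale B) \<and>
     (\<forall>x. \<exists>N f. (\<forall>i. f i \<in> Hn i) \<and> x = (\<Sum>i<N. f i)) \<and>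
     (\<forall>N f. (\<forall>i<N. f i \<in> Hn i) \<longrightarrow> (\<Sum>i<N. f i) = 0 \<longrightarrow> (\<forall>i<N. f i = 0)) \<and>
     \<comment> \<open>connected\<close>
     one \<noteq> 0 \<and> Hn 0 = range (\<lambda>c. scale c one) \<and>
     \<comment> \<open>algebra\<close>
     (\<forall>x y z. mult (x + y) z = mult x z + mult y z) \<and>
     (\<forall>x y z. mult x (y + z) = mult x y + mult x z) \<and>
     (\<forall>c x y. mult (scale c x) y = scale c (mult x y)) \<and>
     (\<forall>c x y. mult x (scale c y) = scale c (mult x y)) \<and>
     (\<forall>x y z. mult (mult x y) z = mult x (mult y z)) \<and>
     (\<forall>x. mult one x = x \<and> mult x one = x) \<and>
     (\<forall>i j x y. x \<in> Hn i \<longrightarrow> y \<in> Hn j \<longrightarrow> mult x y \<in> Hn (i + j)) \<and>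
     \<comment> \<open>coalgebra\<close>
     Vector_Spaces.linear scale (*) eps \<and>
     (\<forall>x y. tens_eq scale (Delta (x + y)) (Delta x @ Delta y)) \<and>
     (\<forall>c x. tens_eq scale (Delta (scale c x)) (map (\<lambda>(a, b). (scale c a, b)) (Delta x))) \<and>
     (\<forall>z. tens3_eq scale
            (concat (map (\<lambda>(a, b). map (\<lambda>(c, d). (c, d, b)) (Delta a)) (Delta z)))
            (concat (map (\<lambda>(a, b). map (\<lambda>(c, d). (a, c, d)) (Delta b)) (Delta z)))) \<and>
     (\<forall>z. sum_list (map (\<lambda>(a, b). scale (eps a) b) (Delta z)) = z) \<and>
     (\<forall>z. sum_list (map (\<lambda>(a, b). scale (eps b) a) (Delta z)) = z) \<and>
     (\<forall>n z. z \<in> Hn n \<longrightarrow> (\<exists>l. tens_eq scale (Delta z) l \<and>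
            (\<forall>(a, b) \<in> set l. \<exists>i j. i + j = n \<and> a \<in> Hn i \<and> b \<in> Hn j))) \<and>
     (\<forall>n z. n \<noteq> 0 \<longrightarrow> z \<in> Hn n \<longrightarrow> eps z = 0) \<and>
     \<comment> \<open>bialgebra compatibility\<close>
     (\<forall>x y. tens_eq scale (Delta (mult x y))
            (concat (map (\<lambda>(a, b). map (\<lambda>(c, d). (mult a c, mult b d)) (Delta y)) (Delta x)))) \<and>
     tens_eq scale (Delta one) [(one, one)] \<and>
     (\<forall>x y. eps (mult x y) = eps x * eps y) \<and> eps one = 1 \<and>
     \<comment> \<open>antipode\<close>
     (\<exists>S. Vector_Spaces.linear scale scale S \<and> (\<forall>n. S ` Hn n \<subseteq> Hn n) \<and>
        (\<forall>z. sum_list (map (\<lambda>(a, b). mult (S a) b) (Delta z)) = scale (eps z) one) \<and>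
        (\<forall>z. sum_list (map (\<lambda>(a, b). mult a (S b)) (Delta z)) = scale (eps z) one))"

definition hopf_pairing ::
  "('k::field \<Rightarrow> 'h::ab_group_add \<Rightarrow> 'h) \<Rightarrow> (nat \<Rightarrow> 'h set) \<Rightarrow> ('h \<Rightarrow> 'h \<Rightarrow> 'h) \<Rightarrow> 'h
    \<Rightarrow> ('h \<Rightarrow> ('h \<times> 'h) list) \<Rightarrow> ('h \<Rightarrow> 'k) \<Rightarrow> ('h \<Rightarrow> 'h \<Rightarrow> 'k) \<Rightarrow> bool" where
  "hopf_pairing scale Hn mult one Delta eps pair \<longleftrightarrow>
     bilinear_form scale pair \<and>
     (\<forall>x. pair x one = eps x \<and> pair one x = eps x) \<and>
     (\<forall>x y z. pair (mult x y) z = tens_eval (\<lambda>a b. pair x a * pair y b) (Delta z)) \<and>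
     (\<forall>x y z. pair x (mult y z) = tens_eval (\<lambda>a b. pair a y * pair b z) (Delta x)) \<and>
     (\<forall>i j x y. i \<noteq> j \<longrightarrow> x \<in> Hn i \<longrightarrow> y \<in> Hn j \<longrightarrow> pair x y = 0)"

definition symmetric_form :: "('h \<Rightarrow> 'h \<Rightarrow> 'k) \<Rightarrow> bool" where
  "symmetric_form pair \<longleftrightarrow> (\<forall>x y. pair x y = pair y x)"

definition nondegenerate_form :: "('h::zero \<Rightarrow> 'h \<Rightarrow> 'k::zero) \<Rightarrow> bool" where
  "nondegenerate_form pair \<longleftrightarrow>
     (\<forall>x. (\<forall>y. pair x y = 0) \<longrightarrow> x = 0) \<and> (\<forall>y. (\<forall>x. pair x y = 0) \<longrightarrow> y = 0)"

definition nondeg_on :: "('h::zero \<Rightarrow> 'h \<Rightarrow> 'k::zero) \<Rightarrow> 'h set \<Rightarrow> 'h set \<Rightarrow> bool" where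
  "nondeg_on pair A B \<longleftrightarrow>
     (\<forall>a\<in>A. (\<forall>b\<in>B. pair a b = 0) \<longrightarrow> a = 0) \<and> (\<forall>b\<in>B. (\<forall>a\<in>A. pair a b = 0) \<longrightarrow> b = 0)"

definition primitives :: "('k::field \<Rightarrow> 'h::ab_group_add \<Rightarrow> 'h) \<Rightarrow> 'h \<Rightarrow> ('h \<Rightarrow> ('h \<times> 'h) list) \<Rightarrow> 'h set" where
  "primitives scale one Delta = {x. tens_eq scale (Delta x) [(x, one), (one, x)]}"

definition Hplus :: "('k::field \<Rightarrow> 'h::ab_group_add \<Rightarrow> 'h) \<Rightarrow> (nat \<Rightarrow> 'h set) \<Rightarrow> 'h set" where
  "Hplus scale Hn = module.span scale (\<Union>i\<in>{1..}. Hn i)"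

definition Hplus2 :: "('k::field \<Rightarrow> 'h::ab_group_add \<Rightarrow> 'h) \<Rightarrow> (nat \<Rightarrow> 'h set) \<Rightarrow> ('h \<Rightarrow> 'h \<Rightarrow> 'h) \<Rightarrow> 'h set" where
  "Hplus2 scale Hn mult =
     module.span scale {mult x y | x y. x \<in> Hplus scale Hn \<and> y \<in> Hplus scale Hn}"

definition sum2 :: "'h::ab_group_add set \<Rightarrow> 'h set \<Rightarrow> 'h set" where
  "sum2 A B = {a + b | a b. a \<in> A \<and> b \<in> B}"

definition sum3 :: "'h::ab_group_add set \<Rightarrow> 'h set \<Rightarrow> 'h set \<Rightarrow> 'h set" where
  "sum3 A B C = {a + b + c | a b c. a \<in> A \<and> b \<in> B \<and> c \<in> C}"

definition direct3 :: "'h::ab_group_add set \<Rightarrow> 'h set \<Rightarrow> 'h set \<Rightarrow> bool" where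
  "direct3 A B C \<longleftrightarrow>
     (\<forall>a\<in>A. \<forall>b\<in>B. \<forall>c\<in>C. a + b + c = 0 \<longrightarrow> a = 0 \<and> b = 0 \<and> c = 0)"

definition is_complement :: "('k::field \<Rightarrow> 'h::ab_group_add \<Rightarrow> 'h) \<Rightarrow> 'h set \<Rightarrow> 'h set \<Rightarrow> 'h set \<Rightarrow> bool" where
  "is_complement scale C A V \<longleftrightarrow>
     module.subspace scale C \<and> C \<subseteq> V \<and> A \<inter> C = {0} \<and> sum2 A C = V"

definition orth_in :: "('h \<Rightarrow> 'h \<Rightarrow> 'k::zero) \<Rightarrow> 'h set \<Rightarrow> 'h set \<Rightarrow> 'h set" where
  "orth_in pair V S = {x \<in> V. \<forall>y\<in>S. pair y x = 0}"

end

theory Submission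
  imports Defs
begin


context vector_space begin
lemma indep_zero:
  assumes f: "finite T" and i: "independent T" and s: "(\<Sum>v\<in>T. u v *s v) = 0" and v: "v \<in> T"
  shows "u v = 0"
proof (rule ccontr)
  assume "u v \<noteq> 0"
  hence "\<exists>u. (\<exists>v\<in>T. u v \<noteq> 0) \<and> (\<Sum>v\<in>T. u v *s v) = 0" using s v by blast
  hence "dependent T" using dependent_finite[OF f] by simp
  thus False using i by simp
qed

end

locale bform = vector_space scale
  for scale :: "'a::field \<Rightarrow> 'b::ab_group_add \<Rightarrow> 'b" (infixr \<open>*s\<close> 75) +
  fixes B :: "'b \<Rightarrow> 'b \<Rightarrow> 'a" and V :: "'b set" and E :: "'b set"
  assumes badd1: "B (x + y) z = B x z + B y z"
    and bsc1: "B (c *s x) y = c * B x y"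
    and bsym: "B x y = B y x"
    and finE: "finite E" and VE: "V = span E"
    and nd: "x \<in> V \<Longrightarrow> (\<forall>y\<in>V. B y x = 0) \<Longrightarrow> x = 0"
begin

lemma badd2: "B x (y + z) = B x y + B x z"
  using badd1 bsym by metis
lemma bsc2: "B x (c *s y) = c * B x y"
  using bsc1 bsym by metis
lemma b0l[simp]: "B 0 y = 0"
  using badd1[of 0 0 y] by (metis add_cancel_right_right)
lemma b0r[simp]: "B x 0 = 0"
  using b0l bsym by metis
lemma bneg1: "B (- x) y = - B x y"
  using badd1[of x "-x" y] by (simp add: eq_neg_iff_add_eq_0 add.commute)
lemma bneg2: "B x (- y) = - B x y"
  using bneg1 bsym by metis
lemma bdiff1: "B (x - y) z = B x z - B y z"
  using badd1[of x "-y" z] bneg1 by simp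
lemma bdiff2: "B x (y - z) = B x y - B x z"
  using bdiff1 bsym by metis
lemma bsum1: "B (sum f A) y = (\<Sum>a\<in>A. B (f a) y)"
  by (induction A rule: infinite_finite_induct) (auto simp: badd1)
lemma bsum2: "B y (sum f A) = (\<Sum>a\<in>A. B y (f a))"
  by (induction A rule: infinite_finite_induct) (auto simp: badd2)

lemmas bsimps = badd1 badd2 bsc1 bsc2 bneg1 bneg2 bdiff1 bdiff2 bsum1 bsum2

lemma subV: "subspace V" using VE by simp

lemma zero_span_l: assumes "\<forall>t\<in>T. B t w = 0" "s \<in> span T" shows "B s w = 0"
proof -
  have "subspace {s. B s w = 0}"
    by (auto simp: subspace_def bsimps)
  then have "span T \<subseteq> {s. B s w = 0}" using assms(1) by (intro span_minimal) auto
  then show ?thesis using assms(2) by auto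
qed

lemma zero_span_r: assumes "\<forall>t\<in>T. B w t = 0" "s \<in> span T" shows "B w s = 0"
  using zero_span_l[of T w s] assms bsym by metis

lemma rep_basis:
  assumes fT: "finite T" and iT: "independent T" and sT: "span T = V"
  shows "\<exists>w\<in>V. \<forall>t\<in>T. B t w = c t"
proof -
  define \<Phi> where "\<Phi> v = (\<Sum>t\<in>T. B t v *s t)" for v
  have lin: "Vector_Spaces.linear scale scale \<Phi>"
    apply (rule Vector_Spaces.linear_iff[THEN iffD2])
    apply (intro conjI allI)
       apply (rule vector_space_axioms)
      apply (rule vector_space_axioms)
     apply (simp add: \<Phi>_def badd2 scale_left_distrib sum.distrib)
    apply (simp add: \<Phi>_def bsc2 scale_sum_right)
    done
  interpret L: Vector_Spaces.linear scale scale \<Phi> by (rule lin)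
  have inj: "inj_on \<Phi> (span T)"
  proof (rule inj_onI)
    fix x y assume x: "x \<in> span T" "y \<in> span T" "\<Phi> x = \<Phi> y"
    hence "(\<Sum>t\<in>T. (B t x - B t y) *s t) = 0"
      by (simp add: \<Phi>_def scale_left_diff_distrib sum_subtractf)
    hence "\<forall>t\<in>T. B t x - B t y = 0"
      using indep_zero[OF fT iT, of "\<lambda>t. B t x - B t y"] by simp
    hence "\<forall>t\<in>T. B t (x - y) = 0" by (simp add: bdiff2)
    hence "\<forall>z\<in>V. B z (x - y) = 0" using zero_span_l sT by blast
    moreover have "x - y \<in> V" using x sT span_diff by blast
    ultimately show "x = y" using nd by force
  qed
  have ind: "independent (\<Phi> ` T)"
    using L.independent_injective_image[OF iT inj] .
  have card: "card (\<Phi> ` T) = card T"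
    using card_image inj_on_subset[OF inj span_superset] by blast
  have inV: "\<Phi> v \<in> span T" for v
    unfolding \<Phi>_def by (intro span_sum span_scale span_base)
  have spanV: "V \<subseteq> span (\<Phi> ` T)"
  proof
    fix v assume v: "v \<in> V"
    show "v \<in> span (\<Phi> ` T)"
    proof (rule ccontr)
      assume nv: "v \<notin> span (\<Phi> ` T)"
      hence i2: "independent (insert v (\<Phi> ` T))" using ind independent_insertI by blast
      have "insert v (\<Phi> ` T) \<subseteq> span T" using v sT inV by auto
      hence "card (insert v (\<Phi> ` T)) \<le> card T" using independent_span_bound[OF fT i2] by blast
      moreover have "v \<notin> \<Phi> ` T" using nv span_base by blast
      ultimately show False using card fT by simp
    qed
  qed
  define y where "y = (\<Sum>t\<in>T. c t *s t)"
  have "y \<in> V" unfolding y_def sT[symmetric] by (intro span_sum span_scale span_base)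
  hence "y \<in> \<Phi> ` span T" using spanV L.span_image by blast
  then obtain w where w: "w \<in> span T" "\<Phi> w = y" by blast
  hence "(\<Sum>t\<in>T. (B t w - c t) *s t) = 0"
    by (simp add: \<Phi>_def y_def scale_left_diff_distrib sum_subtractf)
  hence "\<forall>t\<in>T. B t w - c t = 0"
    using indep_zero[OF fT iT, of "\<lambda>t. B t w - c t"] by simp
  then show ?thesis using w sT by auto
qed

lemma finite_indep_V: assumes "independent T" "T \<subseteq> V" shows "finite T"
  using independent_span_bound[OF finE assms(1)] assms(2) VE by blast

lemma rep_indep:
  assumes iT: "independent T" and TV: "T \<subseteq> V"
  shows "\<exists>w\<in>V. \<forall>t\<in>T. B t w = c t"
proof -
  obtain T2 where T2: "T \<subseteq> T2" "T2 \<subseteq> V" "independent T2" "V \<subseteq> span T2"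
    using maximal_independent_subset_extend[OF TV iT] by blast
  have "span T2 = V" using T2 span_minimal[OF T2(2) subV] by auto
  then obtain w where "w \<in> V" "\<forall>t\<in>T2. B t w = c t"
    using rep_basis[OF finite_indep_V[OF T2(3,2)] T2(3)] by blast
  then show ?thesis using T2 by blast
qed

lemma sep:
  assumes sS: "subspace S" and SV: "S \<subseteq> V" and x: "x \<in> V" "x \<notin> S"
  shows "\<exists>w\<in>V. (\<forall>s\<in>S. B s w = 0) \<and> B x w = 1"
proof -
  obtain T where T: "T \<subseteq> S" "independent T" "S \<subseteq> span T"
    using maximal_independent_subset[of S] by blast
  have "span T \<subseteq> S" using span_minimal[OF T(1) sS] .
  hence xT: "x \<notin> span T" using x by blast
  hence i2: "independent (insert x T)" using T independent_insertI by blast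
  obtain w where w: "w \<in> V" "\<forall>t\<in>insert x T. B t w = (if t = x then 1 else 0)"
    using rep_indep[OF i2, of "\<lambda>t. if t = x then 1 else 0"] T SV x by blast
  have "\<forall>t\<in>T. B t w = 0" using w xT span_base by fastforce
  hence "\<forall>s\<in>S. B s w = 0" using zero_span_l T by blast
  then show ?thesis using w by auto
qed

abbreviation orth where "orth S \<equiv> orth_in B V S"
lemmas orth_def = orth_in_def

lemma orth_sub: "subspace (orth S)"
  unfolding orth_def subspace_def using subV
  by (auto simp: bsimps subspace_def)

lemma orth_V: "orth S \<subseteq> V" by (auto simp: orth_def)

lemma orth_orth: assumes "subspace S" "S \<subseteq> V" shows "orth (orth S) = S"
proof
  show "S \<subseteq> orth (orth S)" using assms(2) bsym by (auto simp: orth_def)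
  show "orth (orth S) \<subseteq> S"
  proof
    fix x assume x: "x \<in> orth (orth S)"
    show "x \<in> S"
    proof (rule ccontr)
      assume "x \<notin> S"
      then obtain w where "w \<in> V" "\<forall>s\<in>S. B s w = 0" "B x w = 1"
        using sep[OF assms, of x] x orth_V by blast
      hence "w \<in> orth S" by (auto simp: orth_def)
      hence "B w x = 0" using x by (auto simp: orth_def)
      thus False using \<open>B x w = 1\<close> bsym by simp
    qed
  qed
qed

end

context bform begin

lemma orth_mem: "x \<in> orth S \<longleftrightarrow> x \<in> V \<and> (\<forall>y\<in>S. B y x = 0)"
  by (simp add: orth_in_def)

lemma sum2_sub: "subspace X \<Longrightarrow> subspace Y \<Longrightarrow> subspace (sum2 X Y)"
  unfolding sum2_def by (rule subspace_sums)

lemma addV: "x \<in> V \<Longrightarrow> y \<in> V \<Longrightarrow> x + y \<in> V"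
  using subspace_add[OF subV] by blast

lemma orth_anti: "S \<subseteq> T \<Longrightarrow> orth T \<subseteq> orth S"
  unfolding orth_in_def by blast

theorem main_abs:
  assumes two: "(2::'a) \<noteq> 0"
    and sP: "subspace P" and PV: "P \<subseteq> V" and sQ: "subspace Q" and QV: "Q \<subseteq> V"
    and PQ: "orth Q = P"
    and hn: "is_complement scale hn (P \<inter> Q) P"
    and mn: "is_complement scale mn (P \<inter> Q) Q"
  shows "nondeg_on B hn hn \<and> (\<exists>wn. is_complement scale wn (sum2 P Q) V \<and>
      (let pn = P \<inter> Q in
        (orth wn = sum3 wn hn mn \<and> direct3 wn hn mn \<and> nondeg_on B pn wn) \<and>
        (orth hn = sum3 pn mn wn \<and> direct3 pn mn wn \<and> nondeg_on B hn hn) \<and>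
        (orth mn = sum3 pn hn wn \<and> direct3 pn hn wn \<and> nondeg_on B mn mn) \<and>
        (orth pn = sum3 pn mn hn \<and> direct3 pn mn hn \<and> nondeg_on B wn pn)))"
proof -
  define pn where "pn = P \<inter> Q"
  have spn: "subspace pn" using sP sQ subspace_inter pn_def by blast
  have pnP: "pn \<subseteq> P" and pnQ: "pn \<subseteq> Q" by (auto simp: pn_def)
  have pnV: "pn \<subseteq> V" using pnP PV by blast
  have F1: "B q p = 0" if "p \<in> P" "q \<in> Q" for p q using PQ that by (auto simp: orth_mem)
  have F1': "B p q = 0" if "p \<in> P" "q \<in> Q" for p q using F1 bsym that by metis
  have F2: "orth P = Q" using orth_orth[OF sQ QV] PQ by simp
  define G where "G = sum2 P Q"
  have sG: "subspace G" unfolding G_def using sum2_sub sP sQ by blast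
  have GV: "G \<subseteq> V" unfolding G_def sum2_def using PV QV subV subspace_add by blast
  have PG: "P \<subseteq> G" unfolding G_def sum2_def using sQ subspace_0 by force
  have QG: "Q \<subseteq> G" unfolding G_def sum2_def using sP subspace_0 by force
  have F3: "orth G = pn"
  proof
    show "orth G \<subseteq> pn" using orth_anti[OF PG] orth_anti[OF QG] F2 PQ pn_def by blast
    show "pn \<subseteq> orth G"
    proof
      fix x assume x: "x \<in> pn"
      have "B y x = 0" if "y \<in> G" for y
      proof -
        obtain p q where "y = p + q" "p \<in> P" "q \<in> Q" using \<open>y \<in> G\<close> unfolding G_def sum2_def by blast
        moreover have "B p x = 0" using F1' x pnQ \<open>p \<in> P\<close> by blast
        moreover have "B q x = 0" using F1 x pnP \<open>q \<in> Q\<close> by blast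
        ultimately show ?thesis by (simp add: badd1)
      qed
      then show "x \<in> orth G" using x pnV by (auto simp: orth_mem)
    qed
  qed
  have F4: "orth pn = G" using orth_orth[OF sG GV] F3 by simp
  have pnG: "B y t = 0" if "y \<in> G" "t \<in> pn" for y t
    using that F3 by (auto simp: orth_mem)
  have pnG': "B t y = 0" if "y \<in> G" "t \<in> pn" for y t
    using pnG[OF that] bsym by metis
  from hn have shn: "subspace hn" and hnP: "hn \<subseteq> P" and hn0: "pn \<inter> hn = {0}" and hnsum: "sum2 pn hn = P"
    unfolding is_complement_def pn_def by auto
  from mn have smn: "subspace mn" and mnQ: "mn \<subseteq> Q" and mn0: "pn \<inter> mn = {0}" and mnsum: "sum2 pn mn = Q"
    unfolding is_complement_def pn_def by auto
  have hnV: "hn \<subseteq> V" using hnP PV by blast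
  have mnV: "mn \<subseteq> V" using mnQ QV by blast
  have F5: "a = 0" if a: "a \<in> hn" "\<forall>b\<in>hn. B b a = 0" for a
  proof -
    have "B y a = 0" if "y \<in> P" for y
    proof -
      obtain t h where "y = t + h" "t \<in> pn" "h \<in> hn" using \<open>y \<in> P\<close> hnsum unfolding sum2_def by blast
      moreover have "B t a = 0" using F1 a hnP pnQ \<open>t \<in> pn\<close> by blast
      ultimately show ?thesis using a by (auto simp: badd1)
    qed
    hence "a \<in> orth P" using a hnV by (auto simp: orth_mem)
    hence "a \<in> pn" using F2 a hnP pn_def by auto
    then show ?thesis using hn0 a by blast
  qed
  have F6: "a = 0" if a: "a \<in> mn" "\<forall>b\<in>mn. B b a = 0" for a
  proof -
    have "B y a = 0" if "y \<in> Q" for y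
    proof -
      obtain t m where "y = t + m" "t \<in> pn" "m \<in> mn" using \<open>y \<in> Q\<close> mnsum unfolding sum2_def by blast
      moreover have "B t a = 0" using F1' a mnQ pnP \<open>t \<in> pn\<close> by blast
      ultimately show ?thesis using a by (auto simp: badd1)
    qed
    hence "a \<in> orth Q" using a mnV by (auto simp: orth_mem)
    hence "a \<in> pn" using PQ a mnQ pn_def by auto
    then show ?thesis using mn0 a by blast
  qed
  have ndh: "nondeg_on B hn hn" unfolding nondeg_on_def using F5 bsym by metis
  have ndm: "nondeg_on B mn mn" unfolding nondeg_on_def using F6 bsym by metis
  obtain Tp where Tp: "Tp \<subseteq> pn" "independent Tp" "pn \<subseteq> span Tp"
    using maximal_independent_subset[of pn] by blast
  have spTp: "span Tp = pn" using Tp span_minimal[OF Tp(1) spn] by auto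
  have fTp: "finite Tp" using finite_indep_V Tp pnV by blast
  define N where "N = sum2 hn mn"
  have sN: "subspace N" unfolding N_def using sum2_sub shn smn by blast
  define S where "S p = sum2 (span (Tp - {p})) N" for p
  have sS: "subspace (S p)" for p unfolding S_def using sum2_sub sN by blast
  have SV: "S p \<subseteq> V" for p
  proof -
    have "span (Tp - {p}) \<subseteq> V" using span_mono[of "Tp - {p}" Tp] spTp pnV by blast
    moreover have "N \<subseteq> V" unfolding N_def sum2_def using hnV mnV subV subspace_add by blast
    ultimately show ?thesis unfolding S_def sum2_def using subV subspace_add by blast
  qed
  have pnotS: "p \<notin> S p" if p: "p \<in> Tp" for p
  proof
    assume "p \<in> S p"
    then obtain a h m where pam: "p = a + (h + m)" "a \<in> span (Tp - {p})" "h \<in> hn" "m \<in> mn"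
      unfolding S_def sum2_def N_def by blast
    have apn: "a \<in> pn" using pam(2) span_mono[of "Tp - {p}" Tp] spTp by blast
    have ppn: "p \<in> pn" using p Tp by blast
    have hpam: "h = p - a - m" using pam(1) by (simp add: algebra_simps)
    have "p - a \<in> Q" using subspace_diff[OF sQ] apn ppn pnQ by blast
    hence "p - a - m \<in> Q" using subspace_diff[OF sQ] mnQ pam(4) by blast
    hence "h \<in> Q" using hpam by simp
    hence "h \<in> pn" using hnP pam pn_def by auto
    hence h0: "h = 0" using hn0 pam by blast
    have mpa: "m = p - a" using pam(1) h0 by (simp add: algebra_simps)
    have "p - a \<in> pn" using subspace_diff[OF spn] apn ppn by blast
    hence "m \<in> pn" using mpa by simp
    hence "m = 0" using mn0 pam by blast
    hence "p \<in> span (Tp - {p})" using pam h0 by simp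
    thus False using Tp(2) p dependent_def by blast
  qed
  have "\<forall>p\<in>Tp. \<exists>w. w \<in> V \<and> (\<forall>s\<in>S p. B s w = 0) \<and> B p w = 1"
    using sep[OF sS SV] pnotS Tp pnV by blast
  then obtain u where u: "\<And>p. p \<in> Tp \<Longrightarrow> u p \<in> V \<and> (\<forall>s\<in>S p. B s (u p) = 0) \<and> B p (u p) = 1"
    by metis
  have N0: "0 \<in> N" "0 \<in> span (Tp - {p})" for p using sN subspace_0 span_zero by auto
  have U1: "B t (u p) = (if t = p then 1 else 0)" if "p \<in> Tp" "t \<in> Tp" for p t
  proof (cases "t = p")
    case True then show ?thesis using u that by simp
  next
    case False
    hence "t \<in> S p" unfolding S_def sum2_def using that N0 span_base[of t "Tp - {p}"]
      by (metis (mono_tags, lifting) DiffI add.right_neutral mem_Collect_eq singletonD)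
    then show ?thesis using u that False by auto
  qed
  have U2: "B h (u p) = 0" if "p \<in> Tp" "h \<in> hn" for p h
  proof -
    have "h \<in> N" unfolding N_def sum2_def using that smn subspace_0 by force
    hence "h \<in> S p" unfolding S_def sum2_def using N0 by force
    then show ?thesis using u that by auto
  qed
  have U3: "B m (u p) = 0" if "p \<in> Tp" "m \<in> mn" for p m
  proof -
    have "m \<in> N" unfolding N_def sum2_def using that shn subspace_0 by force
    hence "m \<in> S p" unfolding S_def sum2_def using N0 by force
    then show ?thesis using u that by auto
  qed
  define z where "z p = (\<Sum>q\<in>Tp. B (u p) (u q) *s q)" for p
  have zpn: "z p \<in> pn" for p
    unfolding z_def using Tp(1) by (intro subspace_sum[OF spn] subspace_scale[OF spn]) auto
  define w where "w p = u p - (1/2) *s z p" for p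
  have wV: "w p \<in> V" if "p \<in> Tp" for p
    unfolding w_def using u[OF that] zpn pnV subspace_diff[OF subV] subspace_scale[OF subV] by blast
  have Wt: "B t (w p) = (if t = p then 1 else 0)" if "p \<in> Tp" "t \<in> Tp" for p t
  proof -
    have "B t (z p) = 0" using F1' zpn pnP pnQ that Tp by blast
    then show ?thesis unfolding w_def using U1[OF that] by (simp add: bsimps)
  qed
  have Wh: "B h (w p) = 0" if "p \<in> Tp" "h \<in> hn" for p h
  proof -
    have "B h (z p) = 0" using F1' zpn pnQ hnP that by blast
    then show ?thesis unfolding w_def using U2[OF that] by (simp add: bsimps)
  qed
  have Wm: "B m (w p) = 0" if "p \<in> Tp" "m \<in> mn" for p m
  proof -
    have "B m (z p) = 0" using F1 zpn pnP mnQ that by blast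
    then show ?thesis unfolding w_def using U3[OF that] by (simp add: bsimps)
  qed
  have Ww: "B (w p) (w q) = 0" if pq: "p \<in> Tp" "q \<in> Tp" for p q
  proof -
    have e1: "B (z p) (u q) = B (u p) (u q)"
    proof -
      have "B (z p) (u q) = (\<Sum>r\<in>Tp. B (u p) (u r) * (if r = q then 1 else 0))"
        unfolding z_def using U1[OF pq(2)] by (simp add: bsimps)
      also have "\<dots> = B (u p) (u q)" using pq fTp by (simp add: if_distrib cong: if_cong)
      finally show ?thesis .
    qed
    have e2: "B (u p) (z q) = B (u p) (u q)"
    proof -
      have "B (u p) (z q) = (\<Sum>r\<in>Tp. B (u q) (u r) * (if r = p then 1 else 0))"
        unfolding z_def using U1[OF pq(1)] bsym by (simp add: bsimps)
      also have "\<dots> = B (u q) (u p)" using pq fTp by (simp add: if_distrib cong: if_cong)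
      finally show ?thesis using bsym by metis
    qed
    have e3: "B (z p) (z q) = 0" using F1 zpn pnP pnQ by blast
    have "B (w p) (w q) = B (u p) (u q) - (1/2) * B (u p) (u q) - (1/2) * B (u p) (u q)"
      unfolding w_def using e1 e2 e3 by (simp add: bsimps algebra_simps)
    also have "\<dots> = 0" using two by (simp add: field_simps)
    finally show ?thesis .
  qed
  have injw: "inj_on w Tp"
  proof (rule inj_onI)
    fix p q assume "p \<in> Tp" "q \<in> Tp" "w p = w q"
    then show "p = q" using Wt[of p p] Wt[of q p] by (metis one_neq_zero)
  qed
  define wn where "wn = span (w ` Tp)"
  have swn: "subspace wn" unfolding wn_def by simp
  have wnV: "wn \<subseteq> V" unfolding wn_def using span_minimal[OF _ subV] wV by blast
  have wwn: "w p \<in> wn" if "p \<in> Tp" for p unfolding wn_def using that span_base by blast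
  have wnrep: "\<exists>c. x = (\<Sum>p\<in>Tp. c p *s w p)" if "x \<in> wn" for x
  proof -
    obtain c where "x = (\<Sum>v\<in>w ` Tp. c v *s v)" using \<open>x \<in> wn\<close> span_finite[of "w ` Tp"] fTp
      unfolding wn_def by auto
    also have "\<dots> = (\<Sum>p\<in>Tp. c (w p) *s w p)" using sum.reindex[OF injw] by simp
    finally show ?thesis by (intro exI[of _ "\<lambda>p. c (w p)"])
  qed
  have pnrep: "\<exists>d. a = (\<Sum>t\<in>Tp. d t *s t)" if "a \<in> pn" for a
    using \<open>a \<in> pn\<close> span_finite[OF fTp] spTp by auto
  have Bwn: "B t (\<Sum>p\<in>Tp. c p *s w p) = c t" if "t \<in> Tp" for t c
  proof -
    have "B t (\<Sum>p\<in>Tp. c p *s w p) = (\<Sum>p\<in>Tp. c p * (if t = p then 1 else 0))"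
      using Wt that by (simp add: bsimps)
    also have "\<dots> = c t" using that fTp by (simp add: if_distrib cong: if_cong)
    finally show ?thesis .
  qed
  have Bpn: "B (\<Sum>t\<in>Tp. d t *s t) (w p) = d p" if "p \<in> Tp" for p d
  proof -
    have "B (\<Sum>t\<in>Tp. d t *s t) (w p) = (\<Sum>t\<in>Tp. d t * (if t = p then 1 else 0))"
      using Wt that by (simp add: bsimps)
    also have "\<dots> = d p" using that fTp by (simp add: if_distrib cong: if_cong)
    finally show ?thesis .
  qed
  have PW: "a = 0" if H: "a \<in> pn" "\<forall>p\<in>Tp. B a (w p) = 0" for a
  proof -
    obtain d where d: "a = (\<Sum>t\<in>Tp. d t *s t)" using pnrep H by blast
    hence "\<forall>p\<in>Tp. d p = 0" using H Bpn by metis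
    then show ?thesis using d by simp
  qed
  have WP: "x = 0" if H: "x \<in> wn" "\<forall>t\<in>Tp. B t x = 0" for x
  proof -
    obtain c where c: "x = (\<Sum>p\<in>Tp. c p *s w p)" using wnrep H by blast
    hence "\<forall>p\<in>Tp. c p = 0" using H Bwn by metis
    then show ?thesis using c by simp
  qed
  have W2: "B x y = 0" if "x \<in> wn" "y \<in> wn" for x y
  proof -
    have "\<forall>t\<in>w ` Tp. B t y = 0"
    proof
      fix t assume "t \<in> w ` Tp"
      then obtain p where p: "p \<in> Tp" "t = w p" by blast
      have "\<forall>s\<in>w ` Tp. B (w p) s = 0" using Ww p by blast
      then show "B t y = 0" using zero_span_r that p unfolding wn_def by blast
    qed
    then show ?thesis using zero_span_l that unfolding wn_def by blast
  qed
  have W3h: "B h x = 0" if "h \<in> hn" "x \<in> wn" for h x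
  proof -
    have "\<forall>s\<in>w ` Tp. B h s = 0" using Wh that by blast
    then show ?thesis using zero_span_r that unfolding wn_def by blast
  qed
  have W3m: "B m x = 0" if "m \<in> mn" "x \<in> wn" for m x
  proof -
    have "\<forall>s\<in>w ` Tp. B m s = 0" using Wm that by blast
    then show ?thesis using zero_span_r that unfolding wn_def by blast
  qed
  have C1: "G \<inter> wn = {0}"
  proof
    show "G \<inter> wn \<subseteq> {0}"
    proof
      fix x assume x: "x \<in> G \<inter> wn"
      hence "\<forall>t\<in>Tp. B t x = 0" using pnG' Tp by blast
      then show "x \<in> {0}" using WP x by blast
    qed
    show "{0} \<subseteq> G \<inter> wn" using subspace_0[OF sG] subspace_0[OF swn] by blast
  qed
  have C2: "sum2 G wn = V"
  proof
    show "sum2 G wn \<subseteq> V" unfolding sum2_def using GV wnV subV subspace_add by blast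
    show "V \<subseteq> sum2 G wn"
    proof
      fix v assume v: "v \<in> V"
      define x where "x = (\<Sum>p\<in>Tp. B p v *s w p)"
      have xwn: "x \<in> wn" unfolding x_def using wwn by (intro subspace_sum[OF swn] subspace_scale[OF swn]) auto
      have "\<forall>t\<in>Tp. B t (v - x) = 0" using Bwn unfolding x_def by (simp add: bdiff2)
      hence "\<forall>a\<in>pn. B a (v - x) = 0" using zero_span_l spTp by blast
      moreover have "v - x \<in> V" using v xwn wnV subspace_diff[OF subV] by blast
      ultimately have "v - x \<in> G" using F4 by (auto simp: orth_mem)
      moreover have "v = (v - x) + x" by simp
      ultimately show "v \<in> sum2 G wn" unfolding sum2_def using xwn by blast
    qed
  qed
  have compl: "is_complement scale wn (sum2 P Q) V"
    unfolding is_complement_def using swn wnV C1 C2 G_def by simp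
  have Dec: "\<exists>a h m x. a \<in> pn \<and> h \<in> hn \<and> m \<in> mn \<and> x \<in> wn \<and> v = a + h + m + x" if H: "v \<in> V" for v
  proof -
    obtain g x where gx: "v = g + x" "g \<in> G" "x \<in> wn" using C2 H unfolding sum2_def by blast
    obtain p q where pq: "g = p + q" "p \<in> P" "q \<in> Q" using gx unfolding G_def sum2_def by blast
    obtain a1 h where ah: "p = a1 + h" "a1 \<in> pn" "h \<in> hn" using pq hnsum unfolding sum2_def by blast
    obtain a2 m where am: "q = a2 + m" "a2 \<in> pn" "m \<in> mn" using pq mnsum unfolding sum2_def by blast
    have "v = (a1 + a2) + h + m + x" using gx pq ah am by (simp add: algebra_simps)
    moreover have "a1 + a2 \<in> pn" using subspace_add[OF spn] ah am by blast
    ultimately show ?thesis using ah am gx by blast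
  qed
  have Uniq: "a = 0 \<and> h = 0 \<and> m = 0 \<and> x = 0"
    if u0: "a \<in> pn" "h \<in> hn" "m \<in> mn" "x \<in> wn" "a + h + m + x = 0" for a h m x
  proof -
    have "(a + h + m) + x = 0" using u0(5) .
    hence "- x = (a + h) + m" by (metis eq_neg_iff_add_eq_0 minus_minus)
    moreover have "a + h \<in> P" using subspace_add[OF sP] u0 pnP hnP by blast
    ultimately have "- x \<in> G" unfolding G_def sum2_def using u0 mnQ by blast
    hence "x \<in> G" using subspace_neg[OF sG] by fastforce
    hence x0: "x = 0" using C1 u0 by blast
    have "h + (a + m) = 0" using u0(5) x0 by (simp add: algebra_simps)
    hence "h = - (a + m)" by (metis eq_neg_iff_add_eq_0)
    hence "h \<in> Q" using subspace_neg[OF sQ] subspace_add[OF sQ] u0 pnQ mnQ by blast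
    hence "h \<in> pn" using u0 hnP pn_def by blast
    hence h0: "h = 0" using hn0 u0 by blast
    have "m + a = 0" using u0(5) x0 h0 by (simp add: algebra_simps)
    hence "m = - a" by (metis eq_neg_iff_add_eq_0)
    hence "m \<in> pn" using subspace_neg[OF spn] u0 by blast
    hence m0: "m = 0" using mn0 u0 by blast
    hence "a = 0" using u0(5) x0 h0 by simp
    then show ?thesis using x0 h0 m0 by simp
  qed
  have hnwn: "B x h = 0" if "h \<in> hn" "x \<in> wn" for h x using W3h[OF that] bsym by metis
  have mnwn: "B x m = 0" if "m \<in> mn" "x \<in> wn" for m x using W3m[OF that] bsym by metis
  have pnpn: "B a b = 0" if "a \<in> pn" "b \<in> pn" for a b using F1 that pnP pnQ by blast
  have i1: "orth wn = sum3 wn hn mn"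
  proof
    show "orth wn \<subseteq> sum3 wn hn mn"
    proof
      fix v assume v: "v \<in> orth wn"
      then obtain a h m x where d: "a \<in> pn" "h \<in> hn" "m \<in> mn" "x \<in> wn" "v = a + h + m + x"
        using Dec orth_V by blast
      have "\<forall>p\<in>Tp. B a (w p) = 0"
      proof
        fix p assume p: "p \<in> Tp"
        have "B (w p) v = 0" using v wwn[OF p] by (auto simp: orth_mem)
        moreover have "B (w p) v = B (w p) a"
          using d hnwn[OF d(2) wwn[OF p]] mnwn[OF d(3) wwn[OF p]] W2[OF wwn[OF p] d(4)] by (simp add: bsimps)
        ultimately show "B a (w p) = 0" using bsym by metis
      qed
      hence "a = 0" using PW d by blast
      hence "v = x + h + m" using d by (simp add: algebra_simps)
      then show "v \<in> sum3 wn hn mn" unfolding sum3_def using d by blast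
    qed
    show "sum3 wn hn mn \<subseteq> orth wn"
    proof
      fix v assume "v \<in> sum3 wn hn mn"
      then obtain x h m where d: "v = x + h + m" "x \<in> wn" "h \<in> hn" "m \<in> mn" unfolding sum3_def by blast
      have "v \<in> V" using d(2-4) wnV hnV mnV unfolding d(1) by (blast intro: addV)
      moreover have "\<forall>y\<in>wn. B y v = 0" using d W2 hnwn mnwn by (simp add: bsimps)
      ultimately show "v \<in> orth wn" by (simp add: orth_mem)
    qed
  qed
  have i2: "direct3 wn hn mn" unfolding direct3_def
    using Uniq[of 0] subspace_0[OF spn] by (simp add: algebra_simps)
  have i3: "nondeg_on B pn wn"
  proof (unfold nondeg_on_def, intro conjI ballI impI)
    fix a assume "a \<in> pn" "\<forall>b\<in>wn. B a b = 0" then show "a = 0" using PW wwn by blast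
  next
    fix b assume "b \<in> wn" "\<forall>a\<in>pn. B a b = 0" then show "b = 0" using WP Tp(1) by blast
  qed
  have ii1: "orth hn = sum3 pn mn wn"
  proof
    show "orth hn \<subseteq> sum3 pn mn wn"
    proof
      fix v assume v: "v \<in> orth hn"
      then obtain a h m x where d: "a \<in> pn" "h \<in> hn" "m \<in> mn" "x \<in> wn" "v = a + h + m + x"
        using Dec orth_V by blast
      have "\<forall>h'\<in>hn. B h' h = 0"
      proof
        fix h' assume h': "h' \<in> hn"
        have "B h' v = 0" using v h' by (auto simp: orth_mem)
        moreover have "B h' a = 0" "B h' m = 0" using F1' h' hnP d pnQ mnQ by blast+
        moreover have "B h' x = 0" using W3h h' d by blast
        ultimately show "B h' h = 0" using d by (simp add: bsimps)
      qed
      hence "h = 0" using F5 d by blast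
      hence "v = a + m + x" using d by (simp add: algebra_simps)
      then show "v \<in> sum3 pn mn wn" unfolding sum3_def using d by blast
    qed
    show "sum3 pn mn wn \<subseteq> orth hn"
    proof
      fix v assume "v \<in> sum3 pn mn wn"
      then obtain a m x where d: "v = a + m + x" "a \<in> pn" "m \<in> mn" "x \<in> wn" unfolding sum3_def by blast
      have "v \<in> V" using d(2-4) wnV pnV mnV unfolding d(1) by (blast intro: addV)
      moreover have "\<forall>y\<in>hn. B y v = 0"
      proof
        fix y assume y: "y \<in> hn"
        have "B y a = 0" "B y m = 0" using F1' y hnP d pnQ mnQ by blast+
        moreover have "B y x = 0" using W3h y d by blast
        ultimately show "B y v = 0" using d by (simp add: bsimps)
      qed
      ultimately show "v \<in> orth hn" by (simp add: orth_mem)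
    qed
  qed
  have ii2: "direct3 pn mn wn" unfolding direct3_def
  proof (intro ballI impI)
    fix a m x assume "a \<in> pn" "m \<in> mn" "x \<in> wn" "a + m + x = 0"
    then show "a = 0 \<and> m = 0 \<and> x = 0" using Uniq[of a 0 m x] subspace_0[OF shn] by simp
  qed
  have iii1: "orth mn = sum3 pn hn wn"
  proof
    show "orth mn \<subseteq> sum3 pn hn wn"
    proof
      fix v assume v: "v \<in> orth mn"
      then obtain a h m x where d: "a \<in> pn" "h \<in> hn" "m \<in> mn" "x \<in> wn" "v = a + h + m + x"
        using Dec orth_V by blast
      have "\<forall>m'\<in>mn. B m' m = 0"
      proof
        fix m' assume m': "m' \<in> mn"
        have "B m' v = 0" using v m' by (auto simp: orth_mem)
        moreover have "B m' a = 0" "B m' h = 0" using F1 m' mnQ d pnP hnP by blast+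
        moreover have "B m' x = 0" using W3m m' d by blast
        ultimately show "B m' m = 0" using d by (simp add: bsimps)
      qed
      hence "m = 0" using F6 d by blast
      hence "v = a + h + x" using d by (simp add: algebra_simps)
      then show "v \<in> sum3 pn hn wn" unfolding sum3_def using d by blast
    qed
    show "sum3 pn hn wn \<subseteq> orth mn"
    proof
      fix v assume "v \<in> sum3 pn hn wn"
      then obtain a h x where d: "v = a + h + x" "a \<in> pn" "h \<in> hn" "x \<in> wn" unfolding sum3_def by blast
      have "v \<in> V" using d(2-4) wnV pnV hnV unfolding d(1) by (blast intro: addV)
      moreover have "\<forall>y\<in>mn. B y v = 0"
      proof
        fix y assume y: "y \<in> mn"
        have "B y a = 0" "B y h = 0" using F1 y mnQ d pnP hnP by blast+
        moreover have "B y x = 0" using W3m y d by blast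
        ultimately show "B y v = 0" using d by (simp add: bsimps)
      qed
      ultimately show "v \<in> orth mn" by (simp add: orth_mem)
    qed
  qed
  have iii2: "direct3 pn hn wn" unfolding direct3_def
  proof (intro ballI impI)
    fix a h x assume "a \<in> pn" "h \<in> hn" "x \<in> wn" "a + h + x = 0"
    then show "a = 0 \<and> h = 0 \<and> x = 0" using Uniq[of a h 0 x] subspace_0[OF smn] by simp
  qed
  have iv1: "orth pn = sum3 pn mn hn"
  proof
    show "orth pn \<subseteq> sum3 pn mn hn"
    proof
      fix v assume v: "v \<in> orth pn"
      then obtain a h m x where d: "a \<in> pn" "h \<in> hn" "m \<in> mn" "x \<in> wn" "v = a + h + m + x"
        using Dec orth_V by blast
      have "\<forall>t\<in>Tp. B t x = 0"
      proof
        fix t assume t: "t \<in> Tp"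
        hence tp: "t \<in> pn" using Tp by blast
        have "B t v = 0" using v tp by (auto simp: orth_mem)
        moreover have "B t a = 0" using pnpn tp d by blast
        moreover have "B t h = 0" using F1 tp pnQ d hnP by blast
        moreover have "B t m = 0" using F1' tp pnP d mnQ by blast
        ultimately show "B t x = 0" using d by (simp add: bsimps)
      qed
      hence "x = 0" using WP d by blast
      hence "v = a + m + h" using d by (simp add: algebra_simps)
      then show "v \<in> sum3 pn mn hn" unfolding sum3_def using d by blast
    qed
    show "sum3 pn mn hn \<subseteq> orth pn"
    proof
      fix v assume "v \<in> sum3 pn mn hn"
      then obtain a m h where d: "v = a + m + h" "a \<in> pn" "m \<in> mn" "h \<in> hn" unfolding sum3_def by blast
      have "v \<in> V" using d(2-4) mnV pnV hnV unfolding d(1) by (blast intro: addV)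
      moreover have "\<forall>y\<in>pn. B y v = 0"
      proof
        fix y assume y: "y \<in> pn"
        have "B y a = 0" using pnpn y d by blast
        moreover have "B y m = 0" using F1' y pnP d mnQ by blast
        moreover have "B y h = 0" using F1 y pnQ d hnP by blast
        ultimately show "B y v = 0" using d by (simp add: bsimps)
      qed
      ultimately show "v \<in> orth pn" by (simp add: orth_mem)
    qed
  qed
  have iv2: "direct3 pn mn hn" unfolding direct3_def
  proof (intro ballI impI)
    fix a m h assume "a \<in> pn" "m \<in> mn" "h \<in> hn" "a + m + h = 0"
    then show "a = 0 \<and> m = 0 \<and> h = 0" using Uniq[of a h m 0] subspace_0[OF swn] by (simp add: algebra_simps)
  qed
  have iv3: "nondeg_on B wn pn"
  proof (unfold nondeg_on_def, intro conjI ballI impI)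
    fix b assume b: "b \<in> wn" "\<forall>a\<in>pn. B b a = 0"
    hence "\<forall>t\<in>Tp. B t b = 0" using Tp(1) bsym by (metis subsetD)
    then show "b = 0" using WP b by blast
  next
    fix a assume a: "a \<in> pn" "\<forall>b\<in>wn. B b a = 0"
    hence "\<forall>p\<in>Tp. B a (w p) = 0" using wwn bsym by metis
    then show "a = 0" using PW a by blast
  qed
  show ?thesis unfolding Let_def pn_def[symmetric]
    apply (intro conjI exI[of _ wn])
    by (fact ndh ndm compl i1 i2 i3 ii1 ii2 iii1 iii2 iv1 iv2 iv3)+
qed

end


lemma vs_field: "vector_space ((*) :: 'k::field \<Rightarrow> 'k \<Rightarrow> 'k)"
  by unfold_locales (simp_all add: algebra_simps)

lemma lin_add: "Vector_Spaces.linear s (*) f \<Longrightarrow> f (x + y) = f x + f y"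
  by (simp add: Vector_Spaces.linear_iff)
lemma lin_scale: "Vector_Spaces.linear s (*) f \<Longrightarrow> f (s c x) = c * f x"
  by (simp add: Vector_Spaces.linear_iff)
lemma lin_0: "Vector_Spaces.linear s (*) f \<Longrightarrow> f 0 = 0"
  using lin_add[of s f 0 0] by (metis add_cancel_right_right add.right_neutral)
lemma lin_neg: "Vector_Spaces.linear s (*) f \<Longrightarrow> f (- x) = - f x"
  using lin_add[of s f x "-x"] lin_0[of s f] by (simp add: eq_neg_iff_add_eq_0 add.commute)
lemma lin_sum: "Vector_Spaces.linear s (*) f \<Longrightarrow> f (sum g A) = (\<Sum>a\<in>A. f (g a))"
  by (induction A rule: infinite_finite_induct) (auto simp: lin_add lin_0)

lemma bf_l: "bilinear_form s \<beta> \<Longrightarrow> Vector_Spaces.linear s (*) (\<lambda>x. \<beta> x y)"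
  by (simp add: bilinear_form_def)
lemma bf_r: "bilinear_form s \<beta> \<Longrightarrow> Vector_Spaces.linear s (*) (\<beta> x)"
  by (simp add: bilinear_form_def)

lemma bf_add1: "bilinear_form s \<beta> \<Longrightarrow> \<beta> (x + y) z = \<beta> x z + \<beta> y z"
  using lin_add[OF bf_l[of s \<beta> z], of x y] by simp
lemma bf_add2: "bilinear_form s \<beta> \<Longrightarrow> \<beta> z (x + y) = \<beta> z x + \<beta> z y"
  using lin_add[OF bf_r[of s \<beta> z], of x y] by simp
lemma bf_sc1: "bilinear_form s \<beta> \<Longrightarrow> \<beta> (s c x) y = c * \<beta> x y"
  using lin_scale[OF bf_l[of s \<beta> y], of c x] by simp
lemma bf_sc2: "bilinear_form s \<beta> \<Longrightarrow> \<beta> y (s c x) = c * \<beta> y x"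
  using lin_scale[OF bf_r[of s \<beta> y], of c x] by simp
lemma bf_neg1: "bilinear_form s \<beta> \<Longrightarrow> \<beta> (- x) y = - \<beta> x y"
  using lin_neg[OF bf_l[of s \<beta> y], of x] by simp
lemma bf_neg2: "bilinear_form s \<beta> \<Longrightarrow> \<beta> y (- x) = - \<beta> y x"
  using lin_neg[OF bf_r[of s \<beta> y], of x] by simp
lemma bf_sum1: "bilinear_form s \<beta> \<Longrightarrow> \<beta> (sum g A) y = (\<Sum>a\<in>A. \<beta> (g a) y)"
  using lin_sum[OF bf_l[of s \<beta> y], of g A] by simp
lemma bf_sum2: "bilinear_form s \<beta> \<Longrightarrow> \<beta> y (sum g A) = (\<Sum>a\<in>A. \<beta> y (g a))"
  using lin_sum[OF bf_r[of s \<beta> y], of g A] by simp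

lemma te_nth: "tens_eval \<beta> l = (\<Sum>i<length l. \<beta> (fst (l ! i)) (snd (l ! i)))"
  unfolding tens_eval_def sum_list_sum_nth by (simp add: split_def atLeast0LessThan)

lemma te_append: "tens_eval \<beta> (l1 @ l2) = tens_eval \<beta> l1 + tens_eval \<beta> l2"
  unfolding tens_eval_def by simp

context vector_space begin

lemma sep_tensor:
  assumes bp: "bilinear_form scale pair"
    and nd: "\<And>y. (\<forall>x. pair x y = 0) \<Longrightarrow> y = 0"
    and hyp: "\<And>u v. tens_eval (\<lambda>a b. pair u a * pair v b) l = 0"
    and bb: "bilinear_form scale \<beta>"
  shows "tens_eval \<beta> l = 0"
proof -
  define I where "I = {..<length l}"
  define a where "a i = fst (l ! i)" for i
  define b where "b i = snd (l ! i)" for i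
  have fI: "finite I" by (simp add: I_def)
  obtain T where T: "T \<subseteq> a ` I" "independent T" "a ` I \<subseteq> span T"
    using maximal_independent_subset[of "a ` I"] by blast
  have fT: "finite T" using T fI finite_subset by blast
  define r where "r i e = representation T (a i) e" for i e
  have arep: "a i = (\<Sum>e\<in>T. r i e *s e)" if "i \<in> I" for i
    unfolding r_def using sum_representation_eq[OF T(2) _ fT order_refl] T(3) that by auto
  define cb where "cb e = (\<Sum>i\<in>I. r i e *s b i)" for e
  have cb0: "cb e = 0" if e: "e \<in> T" for e
  proof -
    have "pair v (cb e) = 0" for v
    proof -
      define y where "y = (\<Sum>i\<in>I. pair v (b i) *s a i)"
      have "pair u y = 0" for u
      proof -
        have "pair u y = (\<Sum>i\<in>I. pair u (a i) * pair v (b i))"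
          unfolding y_def by (simp add: bf_sum2[OF bp] bf_sc2[OF bp] mult.commute)
        also have "\<dots> = 0" using hyp[of u v] unfolding te_nth I_def a_def b_def by simp
        finally show ?thesis .
      qed
      hence y0: "y = 0" using nd by blast
      have "y = (\<Sum>i\<in>I. pair v (b i) *s (\<Sum>e\<in>T. r i e *s e))"
        unfolding y_def using arep by simp
      also have "\<dots> = (\<Sum>e\<in>T. (\<Sum>i\<in>I. pair v (b i) * r i e) *s e)"
        by (simp add: scale_sum_right scale_sum_left sum.swap[of _ I T])
      finally have "(\<Sum>e\<in>T. (\<Sum>i\<in>I. pair v (b i) * r i e) *s e) = 0" using y0 by simp
      hence "(\<Sum>i\<in>I. pair v (b i) * r i e) = 0"
        using indep_zero[OF fT T(2), of "\<lambda>e. \<Sum>i\<in>I. pair v (b i) * r i e"] e by simp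
      moreover have "pair v (cb e) = (\<Sum>i\<in>I. pair v (b i) * r i e)"
        unfolding cb_def by (simp add: bf_sum2[OF bp] bf_sc2[OF bp] mult.commute)
      ultimately show ?thesis by simp
    qed
    then show ?thesis using nd[of "cb e"] bp by auto
  qed
  have "tens_eval \<beta> l = (\<Sum>i\<in>I. \<beta> (a i) (b i))" unfolding te_nth I_def a_def b_def by simp
  also have "\<dots> = (\<Sum>i\<in>I. \<beta> (\<Sum>e\<in>T. r i e *s e) (b i))" using arep by simp
  also have "\<dots> = (\<Sum>e\<in>T. \<beta> e (cb e))"
    unfolding cb_def by (simp add: bf_sum1[OF bb] bf_sum2[OF bb] bf_sc1[OF bb] bf_sc2[OF bb] sum.swap[of _ I T])
  also have "\<dots> = 0" using cb0 bf_sc2[OF bb, of _ 0 0] by simp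
  finally show ?thesis .
qed

end


lemma bf_prod:
  assumes "bilinear_form s p" shows "bilinear_form s (\<lambda>a b. p x a * p y b)"
  using assms unfolding bilinear_form_def Vector_Spaces.linear_iff
  by (auto simp: algebra_simps)

theorem lemma3:
  fixes scale :: "'k::field \<Rightarrow> 'h::ab_group_add \<Rightarrow> 'h"
    and Hn :: "nat \<Rightarrow> 'h set" and mult :: "'h \<Rightarrow> 'h \<Rightarrow> 'h" and one :: 'h
    and Delta :: "'h \<Rightarrow> ('h \<times> 'h) list" and eps :: "'h \<Rightarrow> 'k"
    and pair :: "'h \<Rightarrow> 'h \<Rightarrow> 'k"
    and n :: nat and hn mn :: "'h set"
  assumes char: "(2::'k) \<noteq> 0"
    and H: "graded_connected_hopf scale Hn mult one Delta eps"
    and P: "hopf_pairing scale Hn mult one Delta eps pair"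
    and sym: "symmetric_form pair"
    and nondeg: "nondegenerate_form pair"
    and n: "n \<ge> 1"
    and hn: "is_complement scale hn (primitives scale one Delta \<inter> Hplus2 scale Hn mult \<inter> Hn n)
                (primitives scale one Delta \<inter> Hn n)"
    and mn: "is_complement scale mn (primitives scale one Delta \<inter> Hplus2 scale Hn mult \<inter> Hn n)
                (Hplus2 scale Hn mult \<inter> Hn n)"
  shows "nondeg_on pair hn hn \<and>
    (\<exists>wn. is_complement scale wn
             (sum2 (primitives scale one Delta \<inter> Hn n) (Hplus2 scale Hn mult \<inter> Hn n)) (Hn n) \<and>
      (let pn = primitives scale one Delta \<inter> Hplus2 scale Hn mult \<inter> Hn n in
        (orth_in pair (Hn n) wn = sum3 wn hn mn \<and> direct3 wn hn mn \<and> nondeg_on pair pn wn) \<and>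
        (orth_in pair (Hn n) hn = sum3 pn mn wn \<and> direct3 pn mn wn \<and> nondeg_on pair hn hn) \<and>
        (orth_in pair (Hn n) mn = sum3 pn hn wn \<and> direct3 pn hn wn \<and> nondeg_on pair mn mn) \<and>
        (orth_in pair (Hn n) pn = sum3 pn mn hn \<and> direct3 pn mn hn \<and> nondeg_on pair wn pn)))"
proof -
  note Hd = H[unfolded graded_connected_hopf_def]
  have vs: "vector_space scale" using Hd by (elim conjE) assumption
  interpret vector_space scale by (rule vs)
  have subHn': "\<forall>i. subspace (Hn i)" using Hd by (elim conjE) assumption
  have subHn: "\<And>i. subspace (Hn i)" using subHn' by blast
  have finHn': "\<forall>i. \<exists>B. finite B \<and> Hn i = span B" using Hd by (elim conjE) assumption
  have finHn: "\<exists>B. finite B \<and> Hn n = span B" using finHn' by blast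
  have decomp': "\<forall>x. \<exists>N f. (\<forall>i. f i \<in> Hn i) \<and> x = (\<Sum>i<N. f i)" using Hd by (elim conjE) assumption
  have decomp: "\<And>x. \<exists>N f. (\<forall>i. f i \<in> Hn i) \<and> x = (\<Sum>i<N. f i)" using decomp' by blast
  have Hn0: "Hn 0 = range (\<lambda>c. scale c one)" using Hd by (elim conjE) assumption
  have multL': "\<forall>x y z. mult (x + y) z = mult x z + mult y z" using Hd by (elim conjE) assumption
  have multR': "\<forall>x y z. mult x (y + z) = mult x y + mult x z" using Hd by (elim conjE) assumption
  have multsL': "\<forall>c x y. mult (scale c x) y = scale c (mult x y)" using Hd by (elim conjE) assumption
  have multsR': "\<forall>c x y. mult x (scale c y) = scale c (mult x y)" using Hd by (elim conjE) assumption
  have unit': "\<forall>x. mult one x = x \<and> mult x one = x" using Hd by (elim conjE) assumption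
  have grade': "\<forall>i j x y. x \<in> Hn i \<longrightarrow> y \<in> Hn j \<longrightarrow> mult x y \<in> Hn (i + j)"
    using Hd by (elim conjE) assumption
  have epslin: "Vector_Spaces.linear scale (*) eps" using Hd by (elim conjE) assumption
  have epsgr': "\<forall>n z. n \<noteq> 0 \<longrightarrow> z \<in> Hn n \<longrightarrow> eps z = 0" using Hd by (elim conjE) assumption
  have epsone: "eps one = 1" using Hd by (elim conjE) assumption
  have multL: "\<And>x y z. mult (x + y) z = mult x z + mult y z" using multL' by blast
  have multR: "\<And>x y z. mult x (y + z) = mult x y + mult x z" using multR' by blast
  have multsL: "\<And>c x y. mult (scale c x) y = scale c (mult x y)" using multsL' by blast
  have multsR: "\<And>c x y. mult x (scale c y) = scale c (mult x y)" using multsR' by blast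
  have unitL: "\<And>x. mult one x = x" and unitR: "\<And>x. mult x one = x" using unit' by blast+
  have grade: "\<And>i j x y. x \<in> Hn i \<Longrightarrow> y \<in> Hn j \<Longrightarrow> mult x y \<in> Hn (i + j)" using grade' by blast
  have epsgr: "\<And>m z. m \<noteq> 0 \<Longrightarrow> z \<in> Hn m \<Longrightarrow> eps z = 0" using epsgr' by blast
  note Pd = P[unfolded hopf_pairing_def]
  have bp: "bilinear_form scale pair" using Pd by (elim conjE) assumption
  have pone': "\<forall>x. pair x one = eps x \<and> pair one x = eps x" using Pd by (elim conjE) assumption
  have pone1: "\<And>x. pair x one = eps x" and pone2: "\<And>x. pair one x = eps x" using pone' by blast+
  have pmult': "\<forall>x y z. pair (mult x y) z = tens_eval (\<lambda>a b. pair x a * pair y b) (Delta z)"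
    using Pd by (elim conjE) assumption
  have pmult: "\<And>x y z. pair (mult x y) z = tens_eval (\<lambda>a b. pair x a * pair y b) (Delta z)"
    using pmult' by blast
  have pgr': "\<forall>i j x y. i \<noteq> j \<longrightarrow> x \<in> Hn i \<longrightarrow> y \<in> Hn j \<longrightarrow> pair x y = 0"
    using Pd by (elim conjE) assumption
  have pgr: "\<And>i j x y. i \<noteq> j \<Longrightarrow> x \<in> Hn i \<Longrightarrow> y \<in> Hn j \<Longrightarrow> pair x y = 0" using pgr' by blast
  have psym: "\<And>x y. pair x y = pair y x" using sym unfolding symmetric_form_def by blast
  have nd2: "\<And>y. (\<forall>x. pair x y = 0) \<Longrightarrow> y = 0" using nondeg unfolding nondegenerate_form_def by blast
  have n0: "n \<noteq> 0" using n by simp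
  obtain B0 where B0: "finite B0" "Hn n = span B0" using finHn by blast
  obtain E where E: "E \<subseteq> B0" "independent E" "B0 \<subseteq> span E"
    using maximal_independent_subset[of B0] by blast
  have fE: "finite E" using E B0 finite_subset by blast
  have VE: "Hn n = span E"
  proof -
    have "span E \<subseteq> span B0" using span_mono E by blast
    moreover have "span B0 \<subseteq> span E" using span_minimal[OF E(3)] by simp
    ultimately show ?thesis using B0 by blast
  qed
  have ndn: "x = 0" if x: "x \<in> Hn n" "\<forall>y\<in>Hn n. pair y x = 0" for x
  proof -
    have "pair y x = 0" for y
    proof -
      obtain N f where f: "\<forall>i. f i \<in> Hn i" "y = (\<Sum>i<N. f i)" using decomp by blast
      have "pair (f i) x = 0" for i
        using x f pgr[of i n "f i" x] by (cases "i = n") auto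
      moreover have "pair y x = (\<Sum>i<N. pair (f i) x)" unfolding f(2) by (rule bf_sum1[OF bp])
      ultimately show ?thesis by simp
    qed
    then show ?thesis using nd2 by blast
  qed
  interpret BF: bform scale pair "Hn n" E
    apply (intro bform.intro vs bform_axioms.intro)
    using bf_add1[OF bp] bf_sc1[OF bp] psym fE VE ndn by auto
  define Pr where "Pr = primitives scale one Delta \<inter> Hn n"
  define Q where "Q = Hplus2 scale Hn mult \<inter> Hn n"
  have sQ: "subspace Q" unfolding Q_def Hplus2_def using subHn subspace_inter subspace_span by blast
  have epsHp: "eps x = 0" if "x \<in> Hplus scale Hn" for x
  proof -
    have "subspace {x. eps x = 0}"
      by (auto simp: subspace_def lin_add[OF epslin] lin_scale[OF epslin] lin_0[OF epslin])
    moreover have "(\<Union>i\<in>{1..}. Hn i) \<subseteq> {x. eps x = 0}"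
    proof
      fix z assume "z \<in> (\<Union>i\<in>{1..}. Hn i)"
      then obtain i where "1 \<le> i" "z \<in> Hn i" by auto
      then show "z \<in> {x. eps x = 0}" using epsgr[of i z] by simp
    qed
    ultimately show ?thesis using span_minimal that unfolding Hplus_def by blast
  qed
  have Hp_gen: "u \<in> Hplus scale Hn" if "1 \<le> i" "u \<in> Hn i" for i u
    unfolding Hplus_def using that by (intro span_base) auto
  have prim_orth: "pair q p = 0" if p: "p \<in> Pr" and q: "q \<in> Q" for p q
  proof -
    have pt: "tens_eq scale (Delta p) [(p, one), (one, p)]" using p unfolding Pr_def primitives_def by blast
    have "\<forall>t\<in>{mult x y | x y. x \<in> Hplus scale Hn \<and> y \<in> Hplus scale Hn}. pair t p = 0"
    proof
      fix t assume "t \<in> {mult x y | x y. x \<in> Hplus scale Hn \<and> y \<in> Hplus scale Hn}"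
      then obtain x y where t: "t = mult x y" "x \<in> Hplus scale Hn" "y \<in> Hplus scale Hn" by blast
      have "pair t p = tens_eval (\<lambda>a b. pair x a * pair y b) [(p, one), (one, p)]"
        using pt bf_prod[OF bp] unfolding t(1) pmult tens_eq_def by blast
      also have "\<dots> = pair x p * eps y + eps x * pair y p"
        by (simp add: tens_eval_def pone1 pone2)
      also have "\<dots> = 0" using epsHp t by simp
      finally show "pair t p = 0" .
    qed
    then show ?thesis using BF.zero_span_l q unfolding Q_def Hplus2_def by blast
  qed
  have orth_prim: "x \<in> primitives scale one Delta" if x: "x \<in> Hn n" "\<forall>q\<in>Q. pair q x = 0" for x
  proof -
    have mult0L: "mult 0 v = 0" for v using multL[of 0 0 v] by (metis add_cancel_right_right add.right_neutral)
    have mult0R: "mult v 0 = 0" for v using multR[of v 0 0] by (metis add_cancel_right_right add.right_neutral)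
    have msumL: "mult (sum f A) v = (\<Sum>i\<in>A. mult (f i) v)" for f A v
      by (induction A rule: infinite_finite_induct) (auto simp: mult0L multL)
    have msumR: "mult v (sum f A) = (\<Sum>i\<in>A. mult v (f i))" for f A v
      by (induction A rule: infinite_finite_induct) (auto simp: mult0R multR)
    have epsx: "eps x = 0" using epsgr n0 x by blast
    have hom: "pair (mult u v) x = pair u x * eps v + eps u * pair v x"
      if uv: "u \<in> Hn i" "v \<in> Hn j" for u v i j
    proof (cases "i = 0")
      case True
      then obtain c where c: "u = scale c one" using uv Hn0 by blast
      show ?thesis using c by (simp add: multsL unitL bf_sc1[OF bp] pone2 epsx lin_scale[OF epslin] epsone)
    next
      case i: False
      show ?thesis
      proof (cases "j = 0")
        case True
        then obtain d where d: "v = scale d one" using uv Hn0 by blast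
        show ?thesis using d by (simp add: multsR unitR bf_sc1[OF bp] pone2 epsx lin_scale[OF epslin] epsone)
      next
        case j: False
        have eu: "eps u = 0" using epsgr i uv by blast
        have ev: "eps v = 0" using epsgr j uv by blast
        have muv: "mult u v \<in> Hn (i + j)" using grade uv by blast
        have "pair (mult u v) x = 0"
        proof (cases "i + j = n")
          case True
          have "mult u v \<in> Hplus2 scale Hn mult"
            unfolding Hplus2_def using Hp_gen[of i u] Hp_gen[of j v] uv i j
            by (intro span_base) auto
          hence "mult u v \<in> Q" unfolding Q_def using muv True by blast
          then show ?thesis using x by blast
        next
          case False
          then show ?thesis using pgr muv x by blast
        qed
        then show ?thesis using eu ev by simp
      qed
    qed
    have key: "pair (mult u v) x = pair u x * eps v + eps u * pair v x" for u v
    proof -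
      obtain N f where f: "\<forall>i. f i \<in> Hn i" "u = (\<Sum>i<N. f i)" using decomp by blast
      obtain M g where g: "\<forall>i. g i \<in> Hn i" "v = (\<Sum>i<M. g i)" using decomp by blast
      have "pair (mult u v) x = (\<Sum>i<N. \<Sum>j<M. pair (mult (f i) (g j)) x)"
        unfolding f(2) g(2) by (simp add: msumL msumR bf_sum1[OF bp] sum.swap[of _ "{..<M}"])
      also have "\<dots> = (\<Sum>i<N. \<Sum>j<M. pair (f i) x * eps (g j) + eps (f i) * pair (g j) x)"
        using hom[of "f i" i "g j" j for i j] f g by simp
      also have "\<dots> = (\<Sum>i<N. pair (f i) x) * (\<Sum>j<M. eps (g j)) + (\<Sum>i<N. eps (f i)) * (\<Sum>j<M. pair (g j) x)"
        by (simp add: sum.distrib sum_product)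
      also have "\<dots> = pair u x * eps v + eps u * pair v x"
        unfolding f(2) g(2) by (simp add: bf_sum1[OF bp] lin_sum[OF epslin])
      finally show ?thesis .
    qed
    have "tens_eq scale (Delta x) [(x, one), (one, x)]"
      unfolding tens_eq_def
    proof (intro allI impI)
      fix \<beta> assume bb: "bilinear_form scale \<beta>"
      have "tens_eval \<beta> (Delta x @ [(- x, one), (- one, x)]) = 0"
      proof (rule sep_tensor[OF bp nd2 _ bb])
        fix u v
        show "tens_eval (\<lambda>a b. pair u a * pair v b) (Delta x @ [(- x, one), (- one, x)]) = 0"
          unfolding te_append pmult[symmetric] using key[of u v]
          by (simp add: tens_eval_def bf_neg2[OF bp] pone1 pone2)
      qed
      then show "tens_eval \<beta> (Delta x) = tens_eval \<beta> [(x, one), (one, x)]"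
        by (simp add: te_append tens_eval_def bf_neg1[OF bb] algebra_simps)
    qed
    then show ?thesis unfolding primitives_def by blast
  qed
  have PQ: "BF.orth Q = Pr"
  proof
    show "BF.orth Q \<subseteq> Pr" using orth_prim unfolding Pr_def by (auto simp: BF.orth_mem)
    show "Pr \<subseteq> BF.orth Q" using prim_orth unfolding Pr_def by (auto simp: BF.orth_mem)
  qed
  have sP: "subspace Pr" using PQ BF.orth_sub by metis
  have PQi: "Pr \<inter> Q = primitives scale one Delta \<inter> Hplus2 scale Hn mult \<inter> Hn n"
    unfolding Pr_def Q_def by blast
  have hn': "is_complement scale hn (Pr \<inter> Q) Pr" unfolding PQi using hn by (simp add: Pr_def)
  have mn': "is_complement scale mn (Pr \<inter> Q) Q" unfolding PQi using mn by (simp add: Q_def)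
  have PV: "Pr \<subseteq> Hn n" and QV: "Q \<subseteq> Hn n" unfolding Pr_def Q_def by auto
  note R = BF.main_abs[OF char sP PV sQ QV PQ hn' mn', unfolded PQi]
  show ?thesis using R unfolding Pr_def Q_def .
qed


end
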